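(* Let $R$ be a commutative ring with identity. If $\gamma_t(\Gamma(R)) = 2$ and $R$ is not isomorphic to $\mathbb{Z}_2\times D$ for any integral domain $D$, then $\gamma_t(\Gamma(R)) = \gamma(\Gamma(R))$.
   Context: All rings are commutative with identity. $Z(R)^*$ is the set of nonzero zero-divisors. The zero-divisor graph $\Gamma(R)$ has vertex set $Z(R)^*$; distinct $r,s$ are adjacent iff $rs=0$, and $x$ is adjacent to itself iff $x^2=0$. A dominating set is $X\subseteq Z(R)^*$ such that every vertex not in $X$ is adjacent to some element of $X$; a total dominating set is $X$ such that every vertex (including those in $X$) is adjacent to some element of $X$ (self-adjacency counts). $\gamma$ and $\gamma_t$ denote the respective minimum cardinalities. *)

theory Defs
  imports "HOL-Algebra.Chinese_Remainder" "HOL-Number_Theory.Residues" "HOL-Library.Extended_Nat"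
begin

text \<open>Nonzero zero-divisors Z(R)* of a ring R (vertex set of the zero-divisor graph).\<close>
definition zdiv_star :: "('a, 'm) ring_scheme \<Rightarrow> 'a set" where
  "zdiv_star R = {x \<in> carrier R. x \<noteq> \<zero>\<^bsub>R\<^esub> \<and>
     (\<exists>y \<in> carrier R. y \<noteq> \<zero>\<^bsub>R\<^esub> \<and> x \<otimes>\<^bsub>R\<^esub> y = \<zero>\<^bsub>R\<^esub>)}"

text \<open>Adjacency in Gamma(R): distinct r,s adjacent iff rs = 0; x adjacent to itself iff x^2 = 0.
  Both cases are captured by the product being zero (for vertices of Z(R)*).\<close>
definition zdg_adj :: "('a, 'm) ring_scheme \<Rightarrow> 'a \<Rightarrow> 'a \<Rightarrow> bool" where
  "zdg_adj R x y \<longleftrightarrow> x \<in> zdiv_star R \<and> y \<in> zdiv_star R \<and> x \<otimes>\<^bsub>R\<^esub> y = \<zero>\<^bsub>R\<^esub>"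

definition zdg_dominating :: "('a, 'm) ring_scheme \<Rightarrow> 'a set \<Rightarrow> bool" where
  "zdg_dominating R X \<longleftrightarrow> X \<subseteq> zdiv_star R \<and>
     (\<forall>v \<in> zdiv_star R - X. \<exists>x \<in> X. zdg_adj R v x)"

definition zdg_total_dominating :: "('a, 'm) ring_scheme \<Rightarrow> 'a set \<Rightarrow> bool" where
  "zdg_total_dominating R X \<longleftrightarrow> X \<subseteq> zdiv_star R \<and>
     (\<forall>v \<in> zdiv_star R. \<exists>x \<in> X. zdg_adj R v x)"

text \<open>Domination numbers as minimum cardinalities (\<infinity> if no finite such set exists).\<close>
definition zdg_gamma :: "('a, 'm) ring_scheme \<Rightarrow> enat" where
  "zdg_gamma R = (INF X \<in> {X. zdg_dominating R X \<and> finite X}. enat (card X))"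

definition zdg_gamma_t :: "('a, 'm) ring_scheme \<Rightarrow> enat" where
  "zdg_gamma_t R = (INF X \<in> {X. zdg_total_dominating R X \<and> finite X}. enat (card X))"

end

theory Submission imports Defs begin

lemma RDP_simps:
  "carrier (RDirProd R S) = carrier R \<times> carrier S"
  "(a,b) \<otimes>\<^bsub>RDirProd R S\<^esub> (c,d) = (a \<otimes>\<^bsub>R\<^esub> c, b \<otimes>\<^bsub>S\<^esub> d)"
  "(a,b) \<oplus>\<^bsub>RDirProd R S\<^esub> (c,d) = (a \<oplus>\<^bsub>R\<^esub> c, b \<oplus>\<^bsub>S\<^esub> d)"
  "\<one>\<^bsub>RDirProd R S\<^esub> = (\<one>\<^bsub>R\<^esub>, \<one>\<^bsub>S\<^esub>)"
  by (auto simp add: RDirProd_def DirProd_def monoid.defs)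

lemma (in cring) split_lemma:
  assumes e: "e \<in> carrier R" "e \<otimes> e = e" "e \<noteq> \<zero>" "e \<noteq> \<one>"
    and two: "\<forall>r\<in>carrier R. r \<otimes> e = \<zero> \<or> r \<otimes> e = e"
    and dom: "\<forall>a\<in>carrier R. \<forall>b\<in>carrier R. a \<otimes> e = \<zero> \<longrightarrow> b \<otimes> e = \<zero> \<longrightarrow> a \<otimes> b = \<zero> \<longrightarrow> a = \<zero> \<or> b = \<zero>"
  shows "\<exists>D::'a ring. domain D \<and> R \<simeq> RDirProd (residue_ring 2) D"
proof -
  define f where "f = \<one> \<ominus> e"
  have fc: "f \<in> carrier R" using e by (simp add: f_def)
  have ef0: "e \<otimes> f = e \<ominus> e \<otimes> e" using e unfolding f_def by algebra
  have ef: "e \<otimes> f = \<zero>" using e ef0 by (simp add: r_neg minus_eq)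
  have fe: "f \<otimes> e = \<zero>" using ef fc e m_comm by metis
  have ff0: "f \<otimes> f = f \<ominus> f \<otimes> e" using e unfolding f_def by algebra
  have ff: "f \<otimes> f = f" using ff0 fe fc by (simp add: minus_eq)
  have ef1: "\<one> = e \<oplus> f" using e unfolding f_def by algebra
  have fnz: "f \<noteq> \<zero>"
  proof
    assume "f = \<zero>"
    with ef1 show False using \<open>f = \<zero>\<close> e by (metis r_zero)
  qed
  have ee: "e \<oplus> e = \<zero>"
  proof -
    have "(e \<oplus> e) \<otimes> e = e \<oplus> e" using e by (simp add: l_distr)
    moreover have "e \<oplus> e \<noteq> e" using e by (metis add.l_cancel_one r_zero)
    ultimately show ?thesis using two e by (metis add.m_closed)
  qed
  have dec: "\<And>x. x \<in> carrier R \<Longrightarrow> x = x \<otimes> e \<oplus> x \<otimes> f"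
    using ef1 e(1) fc by (metis r_distr r_one)
  have xfe: "\<And>x. x \<in> carrier R \<Longrightarrow> (x \<otimes> f) \<otimes> e = \<zero>"
    using fc e fe by (simp add: m_assoc)
  define D where "D = \<lparr>carrier = {r \<in> carrier R. r \<otimes> e = \<zero>}, monoid.mult = (\<otimes>),
      one = f, zero = \<zero>, add = (\<oplus>)\<rparr>"
  have Dc: "carrier D = {r \<in> carrier R. r \<otimes> e = \<zero>}" and Dm: "(\<otimes>\<^bsub>D\<^esub>) = (\<otimes>)"
    and D1: "\<one>\<^bsub>D\<^esub> = f" and D0: "\<zero>\<^bsub>D\<^esub> = \<zero>" and Da: "(\<oplus>\<^bsub>D\<^esub>) = (\<oplus>)"
    by (simp_all add: D_def)
  have dfix: "\<And>d. d \<in> carrier R \<Longrightarrow> d \<otimes> e = \<zero> \<Longrightarrow> f \<otimes> d = d"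
  proof -
    fix d assume "d \<in> carrier R" "d \<otimes> e = \<zero>"
    moreover have "f \<otimes> d = d \<ominus> d \<otimes> e" using e \<open>d \<in> carrier R\<close> unfolding f_def by algebra
    ultimately show "f \<otimes> d = d" by (simp add: minus_eq)
  qed
  have cD: "cring D"
  proof (rule cringI)
    show "abelian_group D"
    proof (rule abelian_groupI, unfold Dc Da D0)
      fix x y z assume x: "x \<in> {r \<in> carrier R. r \<otimes> e = \<zero>}" and y: "y \<in> {r \<in> carrier R. r \<otimes> e = \<zero>}"
        and z: "z \<in> {r \<in> carrier R. r \<otimes> e = \<zero>}"
      show "x \<oplus> y \<in> {r \<in> carrier R. r \<otimes> e = \<zero>}" using x y e(1) by (simp add: l_distr)
      show "x \<oplus> y \<oplus> z = x \<oplus> (y \<oplus> z)" using x y z by (simp add: a_assoc)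
      show "x \<oplus> y = y \<oplus> x" using x y by (simp add: a_comm)
      show "\<zero> \<oplus> x = x" using x by simp
      show "\<exists>y\<in>{r \<in> carrier R. r \<otimes> e = \<zero>}. y \<oplus> x = \<zero>"
        using x e(1) by (intro bexI[of _ "\<ominus> x"]) (auto simp: l_minus l_neg)
    next
      show "\<zero> \<in> {r \<in> carrier R. r \<otimes> e = \<zero>}" using e(1) by simp
    qed
    show "comm_monoid D"
    proof (rule comm_monoidI, unfold Dc Dm D1)
      fix x y z assume x: "x \<in> {r \<in> carrier R. r \<otimes> e = \<zero>}" and y: "y \<in> {r \<in> carrier R. r \<otimes> e = \<zero>}"
        and z: "z \<in> {r \<in> carrier R. r \<otimes> e = \<zero>}"
      show "x \<otimes> y \<in> {r \<in> carrier R. r \<otimes> e = \<zero>}" using x y e(1)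
        by (simp add: m_assoc m_comm m_lcomm) (metis m_assoc m_comm r_null)
      show "x \<otimes> y \<otimes> z = x \<otimes> (y \<otimes> z)" using x y z by (simp add: m_assoc)
      show "x \<otimes> y = y \<otimes> x" using x y by (simp add: m_comm)
      show "f \<otimes> x = x" using x dfix by simp
    next
      show "f \<in> {r \<in> carrier R. r \<otimes> e = \<zero>}" using fc fe by simp
    qed
    show "\<And>x y z. x \<in> carrier D \<Longrightarrow> y \<in> carrier D \<Longrightarrow> z \<in> carrier D \<Longrightarrow>
        (x \<oplus>\<^bsub>D\<^esub> y) \<otimes>\<^bsub>D\<^esub> z = x \<otimes>\<^bsub>D\<^esub> z \<oplus>\<^bsub>D\<^esub> y \<otimes>\<^bsub>D\<^esub> z"
      unfolding Dc Dm Da by (auto simp: l_distr)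
  qed
  have dD: "domain D"
    apply (rule domain.intro[OF cD])
    apply (rule domain_axioms.intro)
    using fnz dom unfolding D1 D0 Dm Dc by auto
  define \<phi> where "\<phi> = (\<lambda>x. (if x \<otimes> e = \<zero> then 0::int else 1, x \<otimes> f))"
  have "\<phi> \<in> ring_iso R (RDirProd (residue_ring 2) D)"
  proof (rule ring_iso_memI)
    show "\<And>x. x \<in> carrier R \<Longrightarrow> \<phi> x \<in> carrier (RDirProd (residue_ring 2) D)"
      unfolding RDP_simps \<phi>_def Dc using xfe fc by (auto simp: residue_ring_def)
    show "\<phi> (x \<otimes> y) = \<phi> x \<otimes>\<^bsub>RDirProd (residue_ring 2) D\<^esub> \<phi> y"
      if "x \<in> carrier R" "y \<in> carrier R" for x y
    proof -
      have xe: "x \<otimes> e \<in> carrier R" and ye: "y \<otimes> e \<in> carrier R" using that e by auto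
      have "(x \<otimes> e) \<otimes> (y \<otimes> e) = x \<otimes> (e \<otimes> (y \<otimes> e))" using that e by (simp add: m_assoc)
      also have "e \<otimes> (y \<otimes> e) = y \<otimes> (e \<otimes> e)" by (rule m_lcomm[OF e(1) that(2) e(1)])
      also have "x \<otimes> (y \<otimes> (e \<otimes> e)) = (x \<otimes> y) \<otimes> e" using that e by (simp add: m_assoc)
      finally have m1: "(x \<otimes> y) \<otimes> e = (x \<otimes> e) \<otimes> (y \<otimes> e)" ..
      have "(x \<otimes> f) \<otimes> (y \<otimes> f) = x \<otimes> (f \<otimes> (y \<otimes> f))" using that fc by (simp add: m_assoc)
      also have "f \<otimes> (y \<otimes> f) = y \<otimes> (f \<otimes> f)" by (rule m_lcomm[OF fc that(2) fc])
      also have "x \<otimes> (y \<otimes> (f \<otimes> f)) = (x \<otimes> y) \<otimes> f" using that fc ff by (simp add: m_assoc)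
      finally have m2: "(x \<otimes> y) \<otimes> f = (x \<otimes> f) \<otimes> (y \<otimes> f)" ..
      have fst: "(if (x \<otimes> y) \<otimes> e = \<zero> then 0::int else 1) =
          ((if x \<otimes> e = \<zero> then 0 else 1) * (if y \<otimes> e = \<zero> then 0 else 1)) mod 2"
      proof (cases "x \<otimes> e = \<zero>")
        case True then show ?thesis using m1 ye by simp
      next
        case False
        then have xe1: "x \<otimes> e = e" using two that by blast
        show ?thesis
        proof (cases "y \<otimes> e = \<zero>")
          case True then show ?thesis using m1 xe1 e False by simp
        next
          case False2: False
          then have "y \<otimes> e = e" using two that by blast
          then show ?thesis using m1 xe1 e False False2 by simp
        qed
      qed
      show ?thesis unfolding \<phi>_def RDP_simps Dm using fst m2 by (simp add: residue_ring_def)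
    qed
    show "\<phi> (x \<oplus> y) = \<phi> x \<oplus>\<^bsub>RDirProd (residue_ring 2) D\<^esub> \<phi> y"
      if "x \<in> carrier R" "y \<in> carrier R" for x y
    proof -
      have "(x \<oplus> y) \<otimes> e = (x \<otimes> e) \<oplus> (y \<otimes> e)" using that e by (simp add: l_distr)
      moreover have "(x \<oplus> y) \<otimes> f = (x \<otimes> f) \<oplus> (y \<otimes> f)" using that fc by (simp add: l_distr)
      ultimately show ?thesis unfolding \<phi>_def RDP_simps Da
        using two[rule_format, OF that(1)] two[rule_format, OF that(2)] e ee by (auto simp: residue_ring_def)
    qed
    show "\<phi> \<one> = \<one>\<^bsub>RDirProd (residue_ring 2) D\<^esub>"
      unfolding \<phi>_def RDP_simps D1 using e fc by (auto simp: residue_ring_def)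
    show "bij_betw \<phi> (carrier R) (carrier (RDirProd (residue_ring 2) D))"
    proof (rule bij_betw_imageI)
      show "inj_on \<phi> (carrier R)"
      proof (rule inj_onI)
        fix x y assume xy: "x \<in> carrier R" "y \<in> carrier R" "\<phi> x = \<phi> y"
        then have "x \<otimes> f = y \<otimes> f" by (simp add: \<phi>_def)
        moreover have "x \<otimes> e = y \<otimes> e" using xy two[rule_format, OF xy(1)] two[rule_format, OF xy(2)]
          by (auto simp: \<phi>_def split: if_splits)
        ultimately show "x = y" using dec xy by metis
      qed
      show "\<phi> ` carrier R = carrier (RDirProd (residue_ring 2) D)"
      proof
        show "\<phi> ` carrier R \<subseteq> carrier (RDirProd (residue_ring 2) D)"
          unfolding RDP_simps \<phi>_def Dc using xfe fc by (auto simp: residue_ring_def)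
        show "carrier (RDirProd (residue_ring 2) D) \<subseteq> \<phi> ` carrier R"
        proof
          fix p assume "p \<in> carrier (RDirProd (residue_ring 2) D)"
          then obtain a d where p: "p = (a, d)" "0 \<le> a" "a \<le> 1" "d \<in> carrier R" "d \<otimes> e = \<zero>"
            unfolding RDP_simps Dc by (auto simp: residue_ring_def)
          have df: "d \<otimes> f = d" using dfix p m_comm fc by metis
          show "p \<in> \<phi> ` carrier R"
          proof (cases "a = 0")
            case True
            then show ?thesis using p df by (auto simp: \<phi>_def image_iff intro!: bexI[of _ d])
          next
            case False
            then have "a = 1" using p by auto
            moreover have "(e \<oplus> d) \<otimes> e = e" using e p by (simp add: l_distr)
            moreover have "(e \<oplus> d) \<otimes> f = d" using e p fc ef df by (simp add: l_distr)
            ultimately show ?thesis using p e by (auto simp: \<phi>_def image_iff intro!: bexI[of _ "e \<oplus> d"])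
          qed
        qed
      qed
    qed
  qed
  then show ?thesis using dD unfolding is_ring_iso_def by blast
qed

lemma (in cring) key:
  assumes xZ: "x \<in> zdiv_star R"
    and hyp: "\<And>v. v \<in> zdiv_star R \<Longrightarrow> v \<noteq> x \<Longrightarrow> v \<otimes> x = \<zero>"
    and xx: "x \<otimes> x \<noteq> \<zero>"
  shows "\<exists>D::'a ring. domain D \<and> R \<simeq> RDirProd (residue_ring 2) D"
proof -
  obtain y where xc: "x \<in> carrier R" and xnz: "x \<noteq> \<zero>" and yc: "y \<in> carrier R"
    and ynz: "y \<noteq> \<zero>" and xy: "x \<otimes> y = \<zero>"
    using xZ unfolding zdiv_star_def by auto
  have x2c: "x \<otimes> x \<in> carrier R" using xc by simp
  have x2Z: "x \<otimes> x \<in> zdiv_star R"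
    unfolding zdiv_star_def using x2c xx yc ynz xy xc by (auto simp: m_assoc intro!: bexI[of _ y])
  have idem: "x \<otimes> x = x"
  proof (rule ccontr)
    assume ne: "x \<otimes> x \<noteq> x"
    have x3: "(x \<otimes> x) \<otimes> x = \<zero>" using hyp[OF x2Z ne] .
    define w where "w = x \<oplus> x \<otimes> x"
    have wc: "w \<in> carrier R" using xc by (simp add: w_def)
    have wx: "w \<otimes> x = x \<otimes> x" using xc x3 by (simp add: w_def l_distr)
    have "x \<otimes> (x \<otimes> x) = \<zero>" using x3 xc by (simp add: m_comm)
    moreover have "(x \<otimes> x) \<otimes> (x \<otimes> x) = \<zero>" using x3 xc by (simp add: m_assoc[symmetric])
    ultimately have wx2: "w \<otimes> (x \<otimes> x) = \<zero>" using xc by (simp add: w_def l_distr)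
    have wnz: "w \<noteq> \<zero>" using wx xx xc by auto
    have wZ: "w \<in> zdiv_star R" unfolding zdiv_star_def using wc wnz wx2 x2c xx by auto
    have "w \<noteq> x"
    proof
      assume "w = x"
      then have "x \<oplus> x \<otimes> x = x" using xc by (simp add: w_def)
      then have "x \<otimes> x = \<zero>" using add.l_cancel_one[OF xc x2c] by simp
      then show False using xx by simp
    qed
    then have "w \<otimes> x = \<zero>" using hyp[OF wZ] by simp
    then show False using wx xx by simp
  qed
  have e1: "x \<noteq> \<one>" using xy yc ynz by auto
  have two: "\<forall>r\<in>carrier R. r \<otimes> x = \<zero> \<or> r \<otimes> x = x"
  proof
    fix r assume rc: "r \<in> carrier R"
    show "r \<otimes> x = \<zero> \<or> r \<otimes> x = x"
    proof (rule ccontr)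
      assume "\<not> ?thesis"
      then have a: "r \<otimes> x \<noteq> \<zero>" "r \<otimes> x \<noteq> x" by auto
      have "r \<otimes> x \<in> zdiv_star R" unfolding zdiv_star_def using rc xc a yc ynz xy
        by (auto simp: m_assoc intro!: bexI[of _ y])
      then have "(r \<otimes> x) \<otimes> x = \<zero>" using hyp a by blast
      moreover have "(r \<otimes> x) \<otimes> x = r \<otimes> x" using rc xc idem by (simp add: m_assoc)
      ultimately show False using a by simp
    qed
  qed
  have dom: "\<forall>a\<in>carrier R. \<forall>b\<in>carrier R. a \<otimes> x = \<zero> \<longrightarrow> b \<otimes> x = \<zero> \<longrightarrow> a \<otimes> b = \<zero> \<longrightarrow> a = \<zero> \<or> b = \<zero>"
  proof (intro ballI impI)
    fix a b assume ac: "a \<in> carrier R" and bc: "b \<in> carrier R" and ae: "a \<otimes> x = \<zero>"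
      and be: "b \<otimes> x = \<zero>" and ab: "a \<otimes> b = \<zero>"
    show "a = \<zero> \<or> b = \<zero>"
    proof (rule ccontr)
      assume "\<not> ?thesis"
      then have anz: "a \<noteq> \<zero>" and bnz: "b \<noteq> \<zero>" by auto
      have axc: "a \<oplus> x \<in> carrier R" using ac xc by simp
      have "x \<otimes> b = \<zero>" using be bc xc by (simp add: m_comm)
      then have axb: "(a \<oplus> x) \<otimes> b = \<zero>" using ab ac bc xc by (simp add: l_distr)
      have axx: "(a \<oplus> x) \<otimes> x = x" using ae idem ac xc by (simp add: l_distr)
      have "a \<oplus> x \<noteq> \<zero>" using axx xnz xc by auto
      then have "a \<oplus> x \<in> zdiv_star R" unfolding zdiv_star_def using axc axb bc bnz by auto
      moreover have "a \<oplus> x \<noteq> x" using anz ac xc by simp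
      ultimately have "(a \<oplus> x) \<otimes> x = \<zero>" using hyp by blast
      then show False using axx xnz by simp
    qed
  qed
  show ?thesis by (rule split_lemma[OF xc idem xnz e1 two dom])
qed


lemma enat_INF_attained:
  fixes g :: "'b \<Rightarrow> enat"
  assumes "S \<noteq> {}"
  shows "\<exists>X\<in>S. (INF X\<in>S. g X) = g X"
proof -
  have ne: "g ` S \<noteq> {}" using assms by simp
  have "(INF X\<in>S. g X) = (LEAST y. y \<in> g ` S)" using ne by (simp add: Inf_enat_def)
  moreover have "(LEAST y. y \<in> g ` S) \<in> g ` S" using ne by (metis LeastI ex_in_conv)
  ultimately show ?thesis by auto
qed

theorem proposition3p3:
  fixes R :: "'a ring"
  assumes "cring R"
    and "zdg_gamma_t R = 2"
    and "\<not> (\<exists>D :: 'a ring. domain D \<and> R \<simeq> RDirProd (residue_ring 2) D)"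
  shows "zdg_gamma_t R = zdg_gamma R"
proof -
  let ?T = "{X. zdg_total_dominating R X \<and> finite X}"
  let ?S = "{X. zdg_dominating R X \<and> finite X}"
  have TS: "?T \<subseteq> ?S"
    unfolding zdg_total_dominating_def zdg_dominating_def by auto
  have le: "zdg_gamma R \<le> zdg_gamma_t R"
    unfolding zdg_gamma_def zdg_gamma_t_def by (rule INF_superset_mono[OF TS]) simp
  have lowT: "zdg_gamma_t R \<le> enat (card X)" if "zdg_total_dominating R X" "finite X" for X
    unfolding zdg_gamma_t_def by (rule INF_lower) (use that in simp)
  have "?T \<noteq> {}"
  proof
    assume "?T = {}"
    then have "zdg_gamma_t R = \<infinity>" unfolding zdg_gamma_t_def by (subst \<open>?T = {}\<close>) (simp add: top_enat_def)
    then show False using assms(2) by simp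
  qed
  then have "?S \<noteq> {}" using TS by blast
  then obtain X where X: "zdg_dominating R X" "finite X" and gX: "zdg_gamma R = enat (card X)"
    using enat_INF_attained[of ?S "\<lambda>X. enat (card X)"] unfolding zdg_gamma_def by auto
  have "card X \<ge> 2"
  proof (rule ccontr)
    assume "\<not> card X \<ge> 2"
    then have "card X = 0 \<or> card X = 1" by auto
    then show False
    proof
      assume "card X = 0"
      then have "X = {}" using X(2) by simp
      then have "zdiv_star R = {}" using X(1) unfolding zdg_dominating_def by auto
      then have "zdg_total_dominating R {}" unfolding zdg_total_dominating_def by auto
      then have "zdg_gamma_t R \<le> enat 0" using lowT by fastforce
      then show False using assms(2) by (simp add: zero_enat_def[symmetric])
    next
      assume "card X = 1"
      then obtain x where Xx: "X = {x}" by (auto simp: card_Suc_eq)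
      have xZ: "x \<in> zdiv_star R" using X(1) Xx unfolding zdg_dominating_def by auto
      have hyp: "\<And>v. v \<in> zdiv_star R \<Longrightarrow> v \<noteq> x \<Longrightarrow> v \<otimes>\<^bsub>R\<^esub> x = \<zero>\<^bsub>R\<^esub>"
        using X(1) Xx unfolding zdg_dominating_def zdg_adj_def by auto
      show False
      proof (cases "x \<otimes>\<^bsub>R\<^esub> x = \<zero>\<^bsub>R\<^esub>")
        case True
        have "zdg_total_dominating R {x}" unfolding zdg_total_dominating_def zdg_adj_def
          using xZ hyp True by auto
        then have "zdg_gamma_t R \<le> enat 1" using lowT by fastforce
        then show False using assms(2) by (simp add: one_enat_def[symmetric])
      next
        case False
        show False using cring.key[OF assms(1) xZ hyp False] assms(3) by blast
      qed
    qed
  qed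
  then have "zdg_gamma R \<ge> 2" using gX by (simp add: numeral_eq_enat)
  then show ?thesis using le assms(2) by simp
qed

end
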